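(* Let $W$ be a recurrent infinite word and let $S$ be a graph with words satisfying properties (1)–(6) of a Rauzy scheme for $W$. Then for every factor $u$ of $W$ there is an admissible path $s$ in $S$ such that $u\sqsubseteq F(s)$.
   Context: An infinite word $W$ is recurrent if every factor of $W$ occurs in $W$ infinitely many times. For finite words, $u\sqsubseteq w$ means $u$ is a factor of $w$, and $u\sqsubseteq_k w$ means $u$ occurs in $w$ at least $k$ times. A graph with words is a strongly connected finite directed graph (multiple edges and loops allowed) in which every edge $e$ carries two finite words, a front word $F(e)$ and a back word $B(e)$, and every vertex either has in-degree $1$ and out-degree $>1$ (distributing vertex) or in-degree $>1$ and out-degree $1$ (collecting vertex). A path is a finite nonempty sequence of edges $v_1\dots v_n$ with each $v_{i+1}$ starting where $v_i$ ends; its edge record is the word $v_1\dots v_n$ over the alphabet of edges, and subpaths, prefixes, suffixes and $s_1\sqsubseteq_k s_2$ for paths are defined via edge records. A path is symmetric if its first edge starts at a collecting vertex and its last edge ends at a distributing vertex. For $s=v_1\dots v_n$, $F(s)$ is the concatenation, in order, of the front words of $v_1$ and of all $v_i$ ($i\ge2$) starting at a distributing vertex; $B(s)$ is the concatenation, in order, of the back words of all $v_i$ ($i\le n-1$) ending at a collecting vertex and of $v_n$. The properties of a Rauzy scheme for $W$ are: (1) the graph has more than one edge; (2) front words of edges leaving a common distributing vertex have pairwise distinct first letters, and back words of edges entering a common collecting vertex have pairwise distinct last letters; (3) $F(s)=B(s)$ for every symmetric path $s$; (4) for symmetric paths $s_1,s_2$ and $k\ge1$, $F(s_1)\sqsubseteq_k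 F(s_2)$ implies $s_1\sqsubseteq_k s_2$; (5) all words on edges are factors of $W$; (6) every factor of $W$ is a factor of $F(s)$ for some symmetric path $s$; (7) for every edge $e$ there is a factor $u_e$ of $W$ such that every symmetric path $s$ with $u_e\sqsubseteq F(s)$ passes through $e$. A graph with words satisfying all of (1)–(7) is a Rauzy scheme for $W$. A symmetric path $s$ is admissible if $F(s)\sqsubseteq W$. *)

theory Defs
  imports Main
begin

definition occurs_at_inf :: "'a list \<Rightarrow> (nat \<Rightarrow> 'a) \<Rightarrow> nat \<Rightarrow> bool" where
  "occurs_at_inf u W i \<longleftrightarrow> map W [i..<i + length u] = u"

definition factor_inf :: "'a list \<Rightarrow> (nat \<Rightarrow> 'a) \<Rightarrow> bool" where
  "factor_inf u W \<longleftrightarrow> (\<exists>i. occurs_at_inf u W i)"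

definition recurrent :: "(nat \<Rightarrow> 'a) \<Rightarrow> bool" where
  "recurrent W \<longleftrightarrow> (\<forall>u. factor_inf u W \<longrightarrow> infinite {i. occurs_at_inf u W i})"

definition factor :: "'a list \<Rightarrow> 'a list \<Rightarrow> bool" where
  "factor u w \<longleftrightarrow> (\<exists>p q. w = p @ u @ q)"

definition occ :: "'a list \<Rightarrow> 'a list \<Rightarrow> nat" where
  "occ u w = card {i. i + length u \<le> length w \<and> take (length u) (drop i w) = u}"

definition factor_k :: "'a list \<Rightarrow> nat \<Rightarrow> 'a list \<Rightarrow> bool" where
  "factor_k u k w \<longleftrightarrow> k \<le> occ u w"

text \<open>A graph is given by a set of edges E (of type 'e) together with source and
 target maps into the vertex type 'v; this allows multiple edges and loops. Fw / Bw give front / back words.\<close>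

definition vertices :: "'e set \<Rightarrow> ('e \<Rightarrow> 'v) \<Rightarrow> ('e \<Rightarrow> 'v) \<Rightarrow> 'v set" where
  "vertices E src tgt = src ` E \<union> tgt ` E"

definition indeg :: "'e set \<Rightarrow> ('e \<Rightarrow> 'v) \<Rightarrow> 'v \<Rightarrow> nat" where
  "indeg E tgt v = card {e \<in> E. tgt e = v}"

definition outdeg :: "'e set \<Rightarrow> ('e \<Rightarrow> 'v) \<Rightarrow> 'v \<Rightarrow> nat" where
  "outdeg E src v = card {e \<in> E. src e = v}"

definition distributing :: "'e set \<Rightarrow> ('e \<Rightarrow> 'v) \<Rightarrow> ('e \<Rightarrow> 'v) \<Rightarrow> 'v \<Rightarrow> bool" where
  "distributing E src tgt v \<longleftrightarrow> indeg E tgt v = 1 \<and> outdeg E src v > 1"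

definition collecting :: "'e set \<Rightarrow> ('e \<Rightarrow> 'v) \<Rightarrow> ('e \<Rightarrow> 'v) \<Rightarrow> 'v \<Rightarrow> bool" where
  "collecting E src tgt v \<longleftrightarrow> indeg E tgt v > 1 \<and> outdeg E src v = 1"

definition strongly_connected :: "'e set \<Rightarrow> ('e \<Rightarrow> 'v) \<Rightarrow> ('e \<Rightarrow> 'v) \<Rightarrow> bool" where
  "strongly_connected E src tgt \<longleftrightarrow>
     (\<forall>v \<in> vertices E src tgt. \<forall>w \<in> vertices E src tgt.
        (v, w) \<in> {(src e, tgt e) | e. e \<in> E}\<^sup>*)"

definition graph_with_words ::
  "'e set \<Rightarrow> ('e \<Rightarrow> 'v) \<Rightarrow> ('e \<Rightarrow> 'v) \<Rightarrow> ('e \<Rightarrow> 'a list) \<Rightarrow> ('e \<Rightarrow> 'a list) \<Rightarrow> bool" where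
  "graph_with_words E src tgt Fw Bw \<longleftrightarrow>
     finite E \<and> strongly_connected E src tgt \<and>
     (\<forall>v \<in> vertices E src tgt. distributing E src tgt v \<or> collecting E src tgt v)"

definition is_path :: "'e set \<Rightarrow> ('e \<Rightarrow> 'v) \<Rightarrow> ('e \<Rightarrow> 'v) \<Rightarrow> 'e list \<Rightarrow> bool" where
  "is_path E src tgt s \<longleftrightarrow> s \<noteq> [] \<and> set s \<subseteq> E \<and>
     (\<forall>i. Suc i < length s \<longrightarrow> src (s ! Suc i) = tgt (s ! i))"

definition symmetric_path :: "'e set \<Rightarrow> ('e \<Rightarrow> 'v) \<Rightarrow> ('e \<Rightarrow> 'v) \<Rightarrow> 'e list \<Rightarrow> bool" where
  "symmetric_path E src tgt s \<longleftrightarrow> is_path E src tgt s \<and>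
     collecting E src tgt (src (hd s)) \<and> distributing E src tgt (tgt (last s))"

definition front_word :: "'e set \<Rightarrow> ('e \<Rightarrow> 'v) \<Rightarrow> ('e \<Rightarrow> 'v) \<Rightarrow> ('e \<Rightarrow> 'a list) \<Rightarrow> 'e list \<Rightarrow> 'a list" where
  "front_word E src tgt Fw s =
     Fw (hd s) @ concat (map Fw (filter (\<lambda>e. distributing E src tgt (src e)) (tl s)))"

definition back_word :: "'e set \<Rightarrow> ('e \<Rightarrow> 'v) \<Rightarrow> ('e \<Rightarrow> 'v) \<Rightarrow> ('e \<Rightarrow> 'a list) \<Rightarrow> 'e list \<Rightarrow> 'a list" where
  "back_word E src tgt Bw s =
     concat (map Bw (filter (\<lambda>e. collecting E src tgt (tgt e)) (butlast s))) @ Bw (last s)"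

definition rauzy_props_1_6 ::
  "(nat \<Rightarrow> 'a) \<Rightarrow> 'e set \<Rightarrow> ('e \<Rightarrow> 'v) \<Rightarrow> ('e \<Rightarrow> 'v) \<Rightarrow> ('e \<Rightarrow> 'a list) \<Rightarrow> ('e \<Rightarrow> 'a list) \<Rightarrow> bool" where
  "rauzy_props_1_6 W E src tgt Fw Bw \<longleftrightarrow>
     \<comment> \<open>(1)\<close>
     card E > 1 \<and>
     \<comment> \<open>(2)\<close>
     (\<forall>e1 \<in> E. \<forall>e2 \<in> E. e1 \<noteq> e2 \<longrightarrow> src e1 = src e2 \<longrightarrow> distributing E src tgt (src e1) \<longrightarrow>
         Fw e1 \<noteq> [] \<and> Fw e2 \<noteq> [] \<and> hd (Fw e1) \<noteq> hd (Fw e2)) \<and>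
     (\<forall>e1 \<in> E. \<forall>e2 \<in> E. e1 \<noteq> e2 \<longrightarrow> tgt e1 = tgt e2 \<longrightarrow> collecting E src tgt (tgt e1) \<longrightarrow>
         Bw e1 \<noteq> [] \<and> Bw e2 \<noteq> [] \<and> last (Bw e1) \<noteq> last (Bw e2)) \<and>
     \<comment> \<open>(3)\<close>
     (\<forall>s. symmetric_path E src tgt s \<longrightarrow> front_word E src tgt Fw s = back_word E src tgt Bw s) \<and>
     \<comment> \<open>(4)\<close>
     (\<forall>s1 s2 k. symmetric_path E src tgt s1 \<longrightarrow> symmetric_path E src tgt s2 \<longrightarrow> k \<ge> 1 \<longrightarrow>
         factor_k (front_word E src tgt Fw s1) k (front_word E src tgt Fw s2) \<longrightarrow> factor_k s1 k s2) \<and>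
     \<comment> \<open>(5)\<close>
     (\<forall>e \<in> E. factor_inf (Fw e) W \<and> factor_inf (Bw e) W) \<and>
     \<comment> \<open>(6)\<close>
     (\<forall>u. factor_inf u W \<longrightarrow>
         (\<exists>s. symmetric_path E src tgt s \<and> factor u (front_word E src tgt Fw s)))"

definition admissible ::
  "(nat \<Rightarrow> 'a) \<Rightarrow> 'e set \<Rightarrow> ('e \<Rightarrow> 'v) \<Rightarrow> ('e \<Rightarrow> 'v) \<Rightarrow> ('e \<Rightarrow> 'a list) \<Rightarrow> 'e list \<Rightarrow> bool" where
  "admissible W E src tgt Fw s \<longleftrightarrow>
     symmetric_path E src tgt s \<and> factor_inf (front_word E src tgt Fw s) W"

end

theory Submission
  imports Defs
begin

lemma path_prefix:
  assumes "is_path E src tgt (xs @ ys)" "xs \<noteq> []"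
  shows "is_path E src tgt xs"
  using assms unfolding is_path_def
  by (metis Suc_lessD le_add1 nth_append order_less_le_trans length_append set_append le_sup_iff)

lemma path_suffix:
  assumes "is_path E src tgt (xs @ ys)" "ys \<noteq> []"
  shows "is_path E src tgt ys"
proof -
  have "\<forall>i. Suc i < length ys \<longrightarrow> src (ys ! Suc i) = tgt (ys ! i)"
  proof (intro allI impI)
    fix i assume "Suc i < length ys"
    hence "Suc (length xs + i) < length (xs @ ys)" by simp
    hence "src ((xs@ys) ! Suc (length xs + i)) = tgt ((xs@ys) ! (length xs + i))"
      using assms(1) unfolding is_path_def by blast
    thus "src (ys ! Suc i) = tgt (ys ! i)"
      by (metis add_Suc_right nth_append_length_plus)
  qed
  thus ?thesis using assms unfolding is_path_def by auto
qed

lemma path_junction: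
  assumes "is_path E src tgt (xs @ ys)" "xs \<noteq> []" "ys \<noteq> []"
  shows "src (hd ys) = tgt (last xs)"
proof -
  obtain n where n: "length xs = Suc n" using assms(2) by (cases xs) auto
  have "Suc n < length (xs @ ys)" using n assms(3) by simp
  hence "src ((xs@ys) ! Suc n) = tgt ((xs@ys) ! n)"
    using assms(1) unfolding is_path_def by blast
  moreover have "(xs@ys) ! Suc n = hd ys" using n assms(3)
    by (metis hd_conv_nth nth_append_length_plus add_0_right)
  moreover have "(xs@ys) ! n = last xs" using n assms(2)
    by (simp add: last_conv_nth nth_append)
  ultimately show ?thesis by simp
qed

lemma append_split_right:
  assumes "xs @ ys = zs @ ws" "length ys \<le> length ws"
  shows "\<exists>t. ws = t @ ys \<and> xs = zs @ t"
  using assms by (metis append_eq_append_conv2 append_eq_append_conv length_append le_add2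
      add_le_cancel_right le_antisym)


lemma trim_right:
  assumes sym: "symmetric_path E src tgt s"
    and ex: "\<exists>z\<in>set (tl s). distributing E src tgt (src z)"
  shows "\<exists>p e. symmetric_path E src tgt p \<and> e \<in> E \<and> length p < length s \<and>
     front_word E src tgt Fw s = front_word E src tgt Fw p @ Fw e"
proof -
  obtain q e r where qer: "tl s = q @ e # r" and de: "distributing E src tgt (src e)"
    and nr: "\<forall>z\<in>set r. \<not> distributing E src tgt (src z)"
    using split_list_last_prop[OF ex] by blast
  have sne: "s \<noteq> []" using sym unfolding symmetric_path_def is_path_def by blast
  define p where "p = hd s # q"
  have s_eq: "s = p @ e # r" using sne qer unfolding p_def by (cases s) auto
  have pth: "is_path E src tgt (p @ e # r)" using sym s_eq unfolding symmetric_path_def by simp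
  have pp: "is_path E src tgt p" using path_prefix[OF pth] p_def by simp
  have jn: "src e = tgt (last p)" using path_junction[of E src tgt p "e # r"] pth p_def by simp
  have "symmetric_path E src tgt p"
  proof -
    have "hd p = hd s" unfolding p_def by simp
    thus ?thesis using sym pp jn de unfolding symmetric_path_def by simp
  qed
  moreover have "e \<in> E" using pth unfolding is_path_def by auto
  moreover have "length p < length s" using s_eq by simp
  moreover have "filter (\<lambda>e. distributing E src tgt (src e)) r = []" using nr
    by (simp add: filter_empty_conv)
  hence "front_word E src tgt Fw s = front_word E src tgt Fw p @ Fw e"
  proof -
    have pne: "p \<noteq> []" unfolding p_def by simp
    have "front_word E src tgt Fw (p @ e # r) = front_word E src tgt Fw p @ Fw e"
      unfolding front_word_def using de pne \<open>filter _ r = []\<close> by simp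
    thus ?thesis using s_eq by simp
  qed
  ultimately show ?thesis by blast
qed

lemma no_trim_right:
  assumes "\<not> (\<exists>z\<in>set (tl s). distributing E src tgt (src z))"
  shows "front_word E src tgt Fw s = Fw (hd s)"
proof -
  have "filter (\<lambda>e. distributing E src tgt (src e)) (tl s) = []" using assms
    by (simp add: filter_empty_conv)
  thus ?thesis unfolding front_word_def by simp
qed

lemma trim_left:
  assumes sym: "symmetric_path E src tgt s"
    and ex: "\<exists>z\<in>set (butlast s). collecting E src tgt (tgt z)"
  shows "\<exists>p e. symmetric_path E src tgt p \<and> e \<in> E \<and> length p < length s \<and>
     back_word E src tgt Bw s = Bw e @ back_word E src tgt Bw p"
proof -
  obtain q e r where qer: "butlast s = q @ e # r" and ce: "collecting E src tgt (tgt e)"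
    and nq: "\<forall>z\<in>set q. \<not> collecting E src tgt (tgt z)"
    using split_list_first_prop[OF ex] by blast
  have sne: "s \<noteq> []" using sym unfolding symmetric_path_def is_path_def by blast
  define p where "p = r @ [last s]"
  have s_eq: "s = (q @ [e]) @ p" using sne qer unfolding p_def
    by (metis append_butlast_last_id append.assoc append_Cons append_Nil)
  have pth: "is_path E src tgt ((q @ [e]) @ p)" using sym s_eq unfolding symmetric_path_def by simp
  have pp: "is_path E src tgt p" using path_suffix[OF pth] p_def by simp
  have jn: "src (hd p) = tgt e" using path_junction[OF pth] p_def by simp
  have lp: "last p = last s" using p_def by simp
  have "symmetric_path E src tgt p"
    using sym pp jn ce lp unfolding symmetric_path_def by simp
  moreover have "e \<in> E" using pth unfolding is_path_def by auto
  moreover have "length p < length s" using s_eq by simp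
  moreover have "filter (\<lambda>e. collecting E src tgt (tgt e)) q = []" using nq
    by (simp add: filter_empty_conv)
  hence "back_word E src tgt Bw s = Bw e @ back_word E src tgt Bw p"
    unfolding back_word_def using qer ce lp p_def by simp
  ultimately show ?thesis by blast
qed

lemma no_trim_left:
  assumes "\<not> (\<exists>z\<in>set (butlast s). collecting E src tgt (tgt z))"
  shows "back_word E src tgt Bw s = Bw (last s)"
proof -
  have "filter (\<lambda>e. collecting E src tgt (tgt e)) (butlast s) = []" using assms
    by (simp add: filter_empty_conv)
  thus ?thesis unfolding back_word_def by simp
qed


lemma append_split_left:
  assumes "xs @ ys = zs @ ws" "length xs \<le> length zs"
  shows "\<exists>t. zs = xs @ t \<and> ys = t @ ws"
  by (metis (lifting) append.right_neutral append_eq_append_conv2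
    append_eq_conv_conj assms(1,2) drop_eq_Nil)

lemma trim:
  assumes FB: "\<forall>s. symmetric_path E src tgt s \<longrightarrow> front_word E src tgt Fw s = back_word E src tgt Bw s"
    and LF: "\<forall>e\<in>E. length (Fw e) \<le> L" and LB: "\<forall>e\<in>E. length (Bw e) \<le> L"
  shows "symmetric_path E src tgt s \<Longrightarrow> front_word E src tgt Fw s = \<alpha> @ u @ \<beta> \<Longrightarrow>
    \<exists>s' \<alpha>' \<beta>' x y. symmetric_path E src tgt s' \<and> front_word E src tgt Fw s' = \<alpha>' @ u @ \<beta>'
       \<and> \<alpha> = x @ \<alpha>' \<and> \<beta> = \<beta>' @ y \<and> length \<alpha>' \<le> L \<and> length \<beta>' \<le> L"
proof (induction "length s" arbitrary: s \<alpha> \<beta> rule: less_induct)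
  case less
  have sym: "symmetric_path E src tgt s" by fact
  have hdE: "hd s \<in> E" "last s \<in> E" using sym unfolding symmetric_path_def is_path_def by auto
  show ?case
  proof (cases "length \<beta> > L")
    case True
    show ?thesis
    proof (cases "\<exists>z\<in>set (tl s). distributing E src tgt (src z)")
      case False
      hence "front_word E src tgt Fw s = Fw (hd s)" by (rule no_trim_right)
      hence "length (front_word E src tgt Fw s) \<le> L" using LF hdE by simp
      thus ?thesis using less.prems True by simp
    next
      case True2: True
      obtain p e where p: "symmetric_path E src tgt p" "e \<in> E" "length p < length s"
        "front_word E src tgt Fw s = front_word E src tgt Fw p @ Fw e"
        using trim_right[OF sym True2] by blast
      have "front_word E src tgt Fw p @ Fw e = (\<alpha> @ u) @ \<beta>" using p(4) less.prems by simp
      moreover have "length (Fw e) \<le> length \<beta>" using LF p(2) True by (meson less_imp_le order_trans)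
      ultimately obtain t where t: "\<beta> = t @ Fw e" "(front_word E src tgt Fw p) = (\<alpha> @ u) @ t"
        using append_split_right[of "front_word E src tgt Fw p" "Fw e" "\<alpha> @ u" \<beta>] by blast
      from t(2) have t2: "front_word E src tgt Fw p = \<alpha> @ u @ t" by simp
      obtain s' \<alpha>' \<beta>' x y where h: "symmetric_path E src tgt s'" "front_word E src tgt Fw s' = \<alpha>' @ u @ \<beta>'"
        "\<alpha> = x @ \<alpha>'" "t = \<beta>' @ y" "length \<alpha>' \<le> L" "length \<beta>' \<le> L"
        using less.hyps[OF p(3) p(1) t2] by blast
      have "\<beta> = \<beta>' @ (y @ Fw e)" using t(1) h(4) by simp
      thus ?thesis using h by blast
    qed
  next
    case notR: False
    show ?thesis
    proof (cases "length \<alpha> > L")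
      case True
      show ?thesis
      proof (cases "\<exists>z\<in>set (butlast s). collecting E src tgt (tgt z)")
        case False
        hence "back_word E src tgt Bw s = Bw (last s)" by (rule no_trim_left)
        hence "length (front_word E src tgt Fw s) \<le> L" using LB hdE FB sym by simp
        thus ?thesis using less.prems True by simp
      next
        case True2: True
        obtain p e where p: "symmetric_path E src tgt p" "e \<in> E" "length p < length s"
          "back_word E src tgt Bw s = Bw e @ back_word E src tgt Bw p"
          using trim_left[OF sym True2] by blast
        have "Bw e @ front_word E src tgt Fw p = \<alpha> @ (u @ \<beta>)"
          using p(4) less.prems FB p(1) sym by simp
        moreover have "length (Bw e) \<le> length \<alpha>" using LB p(2) True by (meson less_imp_le order_trans)
        ultimately obtain t where t: "\<alpha> = Bw e @ t" "front_word E src tgt Fw p = t @ u @ \<beta>"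
          using append_split_left[of "Bw e" "front_word E src tgt Fw p" \<alpha> "u @ \<beta>"] by blast
        obtain s' \<alpha>' \<beta>' x y where h: "symmetric_path E src tgt s'" "front_word E src tgt Fw s' = \<alpha>' @ u @ \<beta>'"
          "t = x @ \<alpha>'" "\<beta> = \<beta>' @ y" "length \<alpha>' \<le> L" "length \<beta>' \<le> L"
          using less.hyps[OF p(3) p(1) t(2)] by blast
        have "\<alpha> = (Bw e @ x) @ \<alpha>'" using t(1) h(3) by simp
        thus ?thesis using h by blast
      qed
    next
      case False
      have "symmetric_path E src tgt s \<and> front_word E src tgt Fw s = \<alpha> @ u @ \<beta>
       \<and> \<alpha> = [] @ \<alpha> \<and> \<beta> = \<beta> @ [] \<and> length \<alpha> \<le> L \<and> length \<beta> \<le> L"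
        using less.prems notR False by simp
      thus ?thesis by blast
    qed
  qed
qed

lemma factor_inf_sub:
  assumes "occurs_at_inf (x @ v @ y) W i"
  shows "occurs_at_inf v W (i + length x)"
proof -
  have "map W [i..<i + length (x @ v @ y)] = x @ v @ y" using assms unfolding occurs_at_inf_def .
  hence "take (length v) (drop (length x) (map W [i..<i + length (x @ v @ y)])) = v" by simp
  thus ?thesis unfolding occurs_at_inf_def
    by (simp add: drop_map take_map add.assoc)
qed

theorem lemma3p4:
  fixes W :: "nat \<Rightarrow> 'a"
    and E :: "'e set" and src tgt :: "'e \<Rightarrow> 'v" and Fw Bw :: "'e \<Rightarrow> 'a list"
  assumes "recurrent W"
    and "graph_with_words E src tgt Fw Bw"
    and "rauzy_props_1_6 W E src tgt Fw Bw"
    and "factor_inf u W"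
  shows "\<exists>s. admissible W E src tgt Fw s \<and> factor u (front_word E src tgt Fw s)"
proof -
  have finE: "finite E" using assms(2) unfolding graph_with_words_def by blast
  define L where "L = Max ({0} \<union> (\<lambda>e. length (Fw e)) ` E \<union> (\<lambda>e. length (Bw e)) ` E)"
  have LF: "\<forall>e\<in>E. length (Fw e) \<le> L" and LB: "\<forall>e\<in>E. length (Bw e) \<le> L"
    unfolding L_def using finE by auto
  have FB: "\<forall>s. symmetric_path E src tgt s \<longrightarrow> front_word E src tgt Fw s = back_word E src tgt Bw s"
    and P6: "\<forall>u. factor_inf u W \<longrightarrow>
         (\<exists>s. symmetric_path E src tgt s \<and> factor u (front_word E src tgt Fw s))"
    using assms(3) unfolding rauzy_props_1_6_def by blast+
  have "infinite {i. occurs_at_inf u W i}" using assms(1,4) unfolding recurrent_def by blast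
  then obtain p where pL: "p \<ge> L" and occ: "occurs_at_inf u W p"
    using finite_nat_set_iff_bounded_le[of "{i. occurs_at_inf u W i}"]
    by (metis mem_Collect_eq nat_le_linear)
  define a where "a = map W [p - L..<p]"
  define b where "b = map W [p + length u..<p + length u + L]"
  have up: "map W [p..<p + length u] = u" using occ unfolding occurs_at_inf_def .
  have w_eq: "map W [p - L..<p + length u + L] = a @ u @ b"
  proof -
    have "[p - L..<p + length u + L] = [p - L..<p] @ [p..<p + length u] @ [p + length u..<p + length u + L]"
      using pL by (metis add.assoc diff_le_self le_add1 upt_add_eq_append)
    thus ?thesis unfolding a_def b_def using up by simp
  qed
  have la: "length a = L" and lb: "length b = L" unfolding a_def b_def using pL by auto
  have wocc: "occurs_at_inf (a @ u @ b) W (p - L)"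
  proof -
    have "p - L + length (a @ u @ b) = p + length u + L" using la lb pL by simp
    thus ?thesis unfolding occurs_at_inf_def using w_eq by metis
  qed
  hence "factor_inf (a @ u @ b) W" unfolding factor_inf_def by blast
  then obtain s where s: "symmetric_path E src tgt s" "factor (a @ u @ b) (front_word E src tgt Fw s)"
    using P6 by blast
  then obtain g d where gd: "front_word E src tgt Fw s = (g @ a) @ u @ (b @ d)"
    unfolding factor_def by auto
  obtain s' \<alpha>' \<beta>' x y where r: "symmetric_path E src tgt s'"
    "front_word E src tgt Fw s' = \<alpha>' @ u @ \<beta>'" "g @ a = x @ \<alpha>'" "b @ d = \<beta>' @ y"
    "length \<alpha>' \<le> L" "length \<beta>' \<le> L"
    using trim[OF FB LF LB s(1) gd] by blast
  obtain x' where x': "a = x' @ \<alpha>'" using append_split_right[of x \<alpha>' g a] r(3) r(5) la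
    by auto
  obtain y' where y': "b = \<beta>' @ y'" using append_split_left[of \<beta>' y b d] r(4) r(6) lb
    by auto
  have "occurs_at_inf (x' @ (\<alpha>' @ u @ \<beta>') @ y') W (p - L)" using wocc x' y' by simp
  hence "occurs_at_inf (front_word E src tgt Fw s') W (p - L + length x')"
    using factor_inf_sub r(2) by metis
  hence "admissible W E src tgt Fw s'" unfolding admissible_def factor_inf_def using r(1) by blast
  moreover have "factor u (front_word E src tgt Fw s')" unfolding factor_def using r(2) by blast
  ultimately show ?thesis by blast
qed

end
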